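(* Let $d\ge3$, let $\Delta$ be a shellable simplicial $(d-1)$-sphere with facet-ridge graph $G$, let $2\le k\le d-1$, let $\mathcal{S}_k$ be a star-like $k$-system of $G$, and fix a good acyclic orientation $\mathcal{O}$ of $G$. Then $\mathcal{S}_k=\{\mathcal{S}_k(\sigma):\sigma\in\Delta,\ \dim\sigma=d-k-1\}$. In particular, two star-like $k$-systems of $G$ are identical if and only if they agree on all principal $k$-frames representing the $(d-k-1)$-dimensional faces of $\Delta$ (i.e., $\mathcal{S}_k(\sigma)=\mathcal{S}'_k(\sigma)$ for all such $\sigma$).
   Context: $\Delta$ is a simplicial complex homeomorphic to the $(d-1)$-sphere; facets have $d$ elements, ridges $d-1$; $\dim\sigma=|\sigma|-1$. Shellable: there is an ordering $T_1,\dots,T_n$ of the facets with $\overline{T}_i\cap(\overline{T}_1\cup\cdots\cup\overline{T}_{i-1})$ pure $(d-2)$-dimensional for $i\ge2$ ($\overline{T}$ = all subsets of $T$). The facet-ridge graph $G$ has facets as vertices, adjacent iff they share a ridge; vertex $t$ corresponds to facet $T$. For $0\le k\le d$ and a face $\sigma$ with $|\sigma|=d-k$, $\mathcal{V}^\Delta_k(\sigma)$ is the set of vertices of $G$ whose facets contain $\sigma$; $G[\mathcal{V}^\Delta_k(\sigma)]$ is $k$-regular. An orientation of $G$ is good if for every such $k,\sigma$ the induced orientation on $G[\mathcal{V}^\Delta_k(\sigma)]$ has exactly one sink; acyclic means no directed cycle. A $k$-frame is a subgraph of $G$ isomorphic to $K_{1,k}$, with root the degree-$k$ vertex, written $\langle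 t,t^1,\dots,t^k\rangle$. Given good acyclic $\mathcal{O}$ and a face $\sigma$ of dimension $d-k-1$, the principal $k$-frame representing $\sigma$ is the $k$-frame whose root is the unique sink $t$ of $G[\mathcal{V}^\Delta_k(\sigma)]$ and whose other vertices are the $k$ neighbours of $t$ in $G[\mathcal{V}^\Delta_k(\sigma)]$ (equivalently, the unique $k$-frame $\langle t,t^1,\dots,t^k\rangle$ with $T\cap T^1\cap\cdots\cap T^k=\sigma$ and all edges directed into $t$). A $k$-system of $G$ is a set $\mathcal{S}$ of subsets of $V(G)$ such that $G[S]$ is $k$-regular for every $S\in\mathcal{S}$ and the vertex set of every $k$-frame of $G$ is contained in exactly one member of $\mathcal{S}$; for a $k$-frame $\Phi$, $\mathcal{S}(\Phi)$ is that member, and $\mathcal{S}(\sigma):=\mathcal{S}(\Phi)$ for $\Phi$ the principal $k$-frame representing $\sigma$. A $k$-system $\mathcal{S}_k$ is star-like if every good acyclic orientation of $G$ induces exactly one sink on $G[S]$ for every $S\in\mathcal{S}_k$. *)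

theory Defs
  imports "HOL-Analysis.Analysis"
begin

definition simplicial_complex :: "'a set set \<Rightarrow> bool" where
  "simplicial_complex D \<longleftrightarrow> finite D \<and> D \<noteq> {} \<and> (\<forall>F\<in>D. finite F) \<and>
     (\<forall>F\<in>D. \<forall>G. G \<subseteq> F \<longrightarrow> G \<in> D)"

definition facets :: "'a set set \<Rightarrow> 'a set set" where
  "facets D = {F\<in>D. \<forall>G\<in>D. F \<subseteq> G \<longrightarrow> G = F}"

text \<open>Geometric realization: points are barycentric-coordinate functions whose support is a
  face, with the subspace topology of the product topology on 'a \<Rightarrow> real.\<close>
definition geom_realization :: "'a set set \<Rightarrow> ('a \<Rightarrow> real) topology" where
  "geom_realization D = subtopology (powertop_real UNIV)
     {f. (\<forall>v. 0 \<le> f v) \<and> {v. f v \<noteq> 0} \<in> D \<and> sum f {v. f v \<noteq> 0} = 1}"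

definition simplicial_sphere :: "nat \<Rightarrow> 'a set set \<Rightarrow> bool" where
  "simplicial_sphere d D \<longleftrightarrow> simplicial_complex D \<and>
     geom_realization D homeomorphic_space nsphere (d - 1) \<and>
     (\<forall>F\<in>facets D. card F = d)"

definition pure_of_card :: "nat \<Rightarrow> 'a set set \<Rightarrow> bool" where
  "pure_of_card m K \<longleftrightarrow> (\<forall>F\<in>K. (\<forall>G\<in>K. F \<subseteq> G \<longrightarrow> G = F) \<longrightarrow> card F = m)"

definition shellable :: "nat \<Rightarrow> 'a set set \<Rightarrow> bool" where
  "shellable d D \<longleftrightarrow> (\<exists>Ts. distinct Ts \<and> set Ts = facets D \<and>
     (\<forall>i. 1 \<le> i \<and> i < length Ts \<longrightarrow>
        pure_of_card (d - 1) (Pow (Ts ! i) \<inter> (\<Union>j<i. Pow (Ts ! j)))))"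

text \<open>Vertices of the facet-ridge graph are the facets themselves; two facets are adjacent
  iff they share a ridge (a (d-1)-element set).\<close>
definition fr_adj :: "nat \<Rightarrow> 'a set set \<Rightarrow> 'a set \<Rightarrow> 'a set \<Rightarrow> bool" where
  "fr_adj d D T T' \<longleftrightarrow> T \<in> facets D \<and> T' \<in> facets D \<and> T \<noteq> T' \<and> card (T \<inter> T') = d - 1"

definition Vk :: "'a set set \<Rightarrow> 'a set \<Rightarrow> 'a set set" where
  "Vk D \<sigma> = {T\<in>facets D. \<sigma> \<subseteq> T}"

text \<open>An orientation: a relation Or (Or T T' = edge directed from T to T') such that
  each edge gets exactly one direction and only edges are directed.\<close>
definition orientation :: "nat \<Rightarrow> 'a set set \<Rightarrow> ('a set \<Rightarrow> 'a set \<Rightarrow> bool) \<Rightarrow> bool" where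
  "orientation d D Or \<longleftrightarrow> (\<forall>T T'. Or T T' \<longrightarrow> fr_adj d D T T') \<and>
     (\<forall>T T'. fr_adj d D T T' \<longrightarrow> (Or T T' \<longleftrightarrow> \<not> Or T' T))"

definition is_sink :: "('a set \<Rightarrow> 'a set \<Rightarrow> bool) \<Rightarrow> 'a set set \<Rightarrow> 'a set \<Rightarrow> bool" where
  "is_sink Or S t \<longleftrightarrow> t \<in> S \<and> (\<forall>u\<in>S. \<not> Or t u)"

definition good_orientation :: "nat \<Rightarrow> 'a set set \<Rightarrow> ('a set \<Rightarrow> 'a set \<Rightarrow> bool) \<Rightarrow> bool" where
  "good_orientation d D Or \<longleftrightarrow> orientation d D Or \<and>
     (\<forall>k\<le>d. \<forall>\<sigma>\<in>D. card \<sigma> = d - k \<longrightarrow> (\<exists>!t. is_sink Or (Vk D \<sigma>) t))"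

definition acyclic_orientation :: "('a set \<Rightarrow> 'a set \<Rightarrow> bool) \<Rightarrow> bool" where
  "acyclic_orientation Or \<longleftrightarrow> (\<forall>T. \<not> Or\<^sup>+\<^sup>+ T T)"

text \<open>A k-frame: a subgraph isomorphic to K_{1,k}, given by its root t and the set N of its
  k leaves, all adjacent to t.\<close>
definition k_frame :: "nat \<Rightarrow> 'a set set \<Rightarrow> nat \<Rightarrow> 'a set \<Rightarrow> 'a set set \<Rightarrow> bool" where
  "k_frame d D k t N \<longleftrightarrow> t \<in> facets D \<and> card N = k \<and> (\<forall>u\<in>N. fr_adj d D t u)"

definition k_regular_on :: "nat \<Rightarrow> 'a set set \<Rightarrow> nat \<Rightarrow> 'a set set \<Rightarrow> bool" where
  "k_regular_on d D k S \<longleftrightarrow> S \<subseteq> facets D \<and> (\<forall>t\<in>S. card {u\<in>S. fr_adj d D t u} = k)"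

definition k_system :: "nat \<Rightarrow> 'a set set \<Rightarrow> nat \<Rightarrow> 'a set set set \<Rightarrow> bool" where
  "k_system d D k SS \<longleftrightarrow> (\<forall>S\<in>SS. k_regular_on d D k S) \<and>
     (\<forall>t N. k_frame d D k t N \<longrightarrow> (\<exists>!S. S \<in> SS \<and> insert t N \<subseteq> S))"

definition star_like :: "nat \<Rightarrow> 'a set set \<Rightarrow> nat \<Rightarrow> 'a set set set \<Rightarrow> bool" where
  "star_like d D k SS \<longleftrightarrow> k_system d D k SS \<and>
     (\<forall>Or. good_orientation d D Or \<and> acyclic_orientation Or \<longrightarrow>
        (\<forall>S\<in>SS. \<exists>!t. is_sink Or S t))"

definition principal_root :: "('a set \<Rightarrow> 'a set \<Rightarrow> bool) \<Rightarrow> 'a set set \<Rightarrow> 'a set \<Rightarrow> 'a set" where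
  "principal_root Or D \<sigma> = (THE t. is_sink Or (Vk D \<sigma>) t)"

definition principal_leaves ::
  "nat \<Rightarrow> 'a set set \<Rightarrow> ('a set \<Rightarrow> 'a set \<Rightarrow> bool) \<Rightarrow> 'a set \<Rightarrow> 'a set set" where
  "principal_leaves d D Or \<sigma> = {u\<in>Vk D \<sigma>. fr_adj d D (principal_root Or D \<sigma>) u}"

definition sys_of_face ::
  "nat \<Rightarrow> 'a set set \<Rightarrow> ('a set \<Rightarrow> 'a set \<Rightarrow> bool) \<Rightarrow> 'a set set set \<Rightarrow> 'a set \<Rightarrow> 'a set set" where
  "sys_of_face d D Or SS \<sigma> = (THE S. S \<in> SS \<and>
      insert (principal_root Or D \<sigma>) (principal_leaves d D Or \<sigma>) \<subseteq> S)"

end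

theory Submission
  imports Defs "HOL-Homology.Invariance_of_Domain"
begin


lemma topspace_nsphere_eq:
  "topspace (nsphere m) = {x. (\<Sum>i\<le>m. x i ^ 2) = 1 \<and> (\<forall>i>m. x i = 0)}"
  by (simp add: nsphere)

lemma topspace_Eucl_eq: "topspace (Euclidean_space m) = {x. \<forall>i\<ge>m. x i = 0}"
  by (simp add: topspace_Euclidean_space)

lemma openin_pos:
  assumes "continuous_map X euclideanreal f"
  shows "openin X {x \<in> topspace X. 0 < f x}"
  using openin_continuous_map_preimage[OF assms, of "{0<..}"] by simp

lemma cm_proj_E [continuous_intros]:
  "continuous_map (subtopology (Euclidean_space m) V) euclideanreal (\<lambda>x. x i)"
  unfolding Euclidean_space_def subtopology_subtopology
  by (intro continuous_intros) auto

lemma cm_proj_S [continuous_intros]: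
  "continuous_map (subtopology (nsphere m) V) euclideanreal (\<lambda>x. x i)"
  by (intro continuous_map_from_subtopology continuous_map_nsphere_projection)

definition psi0 :: "nat \<Rightarrow> (nat \<Rightarrow> real) \<Rightarrow> nat \<Rightarrow> real" where
  "psi0 m z = (\<lambda>i. if i = m then sqrt (1 - (\<Sum>i<m. z i ^ 2)) else z i)"

definition B0 :: "nat \<Rightarrow> (nat \<Rightarrow> real) set" where
  "B0 m = {z \<in> topspace (Euclidean_space m). 0 < 1 - (\<Sum>i<m. z i ^ 2)}"

lemma openin_B0: "openin (Euclidean_space m) (B0 m)"
  unfolding B0_def
proof (rule openin_pos)
  have "continuous_map (Euclidean_space m) euclideanreal (\<lambda>x. x i)" for i
    using cm_proj_E[where V=UNIV] by simp
  then show "continuous_map (Euclidean_space m) euclideanreal (\<lambda>x. 1 - (\<Sum>i<m. x i ^ 2))"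
    by (intro continuous_map_diff continuous_map_const[THEN iffD2] continuous_map_sum continuous_map_real_pow) auto
qed


lemma sum_atMost_split: "(\<Sum>i\<le>(m::nat). f i) = (\<Sum>i<m. f i) + (f m :: real)"
  using sum.lessThan_Suc[of f m] by (simp add: lessThan_Suc_atMost)

lemma psi0_in:
  assumes "z \<in> B0 m"
  shows "psi0 m z \<in> topspace (nsphere m)" "0 < psi0 m z m"
proof -
  have z: "\<forall>i\<ge>m. z i = 0" "0 < 1 - (\<Sum>i<m. z i ^ 2)" using assms unfolding B0_def topspace_Eucl_eq by auto
  have "(\<Sum>i<m. psi0 m z i ^ 2) = (\<Sum>i<m. z i ^ 2)" unfolding psi0_def by (intro sum.cong) auto
  moreover have "psi0 m z m ^ 2 = 1 - (\<Sum>i<m. z i ^ 2)" unfolding psi0_def using z by simp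
  ultimately have "(\<Sum>i\<le>m. psi0 m z i ^ 2) = 1" by (simp add: sum_atMost_split)
  moreover have "\<forall>i>m. psi0 m z i = 0" using z unfolding psi0_def by auto
  ultimately show "psi0 m z \<in> topspace (nsphere m)" unfolding topspace_nsphere_eq by auto
  show "0 < psi0 m z m" unfolding psi0_def using z by simp
qed

lemma psi0_cont: "continuous_map (subtopology (Euclidean_space m) (B0 m)) (nsphere m) (psi0 m)"
proof -
  have pr: "continuous_map (subtopology (Euclidean_space m) (B0 m)) euclideanreal (\<lambda>x. x i)" for i
    by (rule cm_proj_E)
  have "continuous_map (subtopology (Euclidean_space m) (B0 m)) euclideanreal (\<lambda>x. psi0 m x k)" for k
  proof (cases "k = m")
    case True
    show ?thesis unfolding psi0_def True
      by (simp, intro continuous_map_sqrt continuous_map_diff continuous_map_const[THEN iffD2] continuous_map_sum continuous_map_real_pow pr) auto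
  next
    case False
    then show ?thesis unfolding psi0_def using pr by simp
  qed
  then have "continuous_map (subtopology (Euclidean_space m) (B0 m)) (powertop_real UNIV) (psi0 m)"
    by (simp add: continuous_map_componentwise_UNIV)
  moreover have "psi0 m \<in> topspace (subtopology (Euclidean_space m) (B0 m)) \<rightarrow> topspace (nsphere m)"
    using psi0_in(1) openin_B0 openin_subset by (fastforce simp: topspace_subtopology)
  ultimately show ?thesis
    unfolding nsphere[of m] continuous_map_in_subtopology by (simp add: topspace_nsphere_eq[unfolded nsphere[of m]])
qed

lemma psi0_inj: "inj_on (psi0 m) (B0 m)"
proof (rule inj_onI)
  fix x y assume x: "x \<in> B0 m" and y: "y \<in> B0 m" and e: "psi0 m x = psi0 m y"
  show "x = y"
  proof
    fix i show "x i = y i"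
    proof (cases "i = m")
      case True then show ?thesis using x y unfolding B0_def topspace_Eucl_eq by auto
    next
      case False then show ?thesis using fun_cong[OF e, of i] unfolding psi0_def by auto
    qed
  qed
qed

definition phi0 :: "nat \<Rightarrow> (nat \<Rightarrow> real) \<Rightarrow> nat \<Rightarrow> real" where
  "phi0 m y = (\<lambda>i. if i = m then 0 else y i)"

lemma phi0_cont: "continuous_map (subtopology (nsphere m) W) (Euclidean_space m) (phi0 m)"
proof -
  have "continuous_map (subtopology (nsphere m) W) (Euclidean_space m) (\<lambda>x i. if i < m then x i else 0)"
    unfolding continuous_map_componentwise_Euclidean_space by (auto intro: cm_proj_S)
  moreover have "(\<lambda>x i. if i < m then x i else 0) x = phi0 m x" if "x \<in> topspace (subtopology (nsphere m) W)" for x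
    using that unfolding phi0_def by (auto simp: topspace_nsphere_eq)
  ultimately show ?thesis using continuous_map_eq by blast
qed

lemma phi0_inj: "inj_on (phi0 m) {y \<in> topspace (nsphere m). 0 < y m}"
proof (rule inj_onI)
  fix x y assume x: "x \<in> {y \<in> topspace (nsphere m). 0 < y m}" and y: "y \<in> {y \<in> topspace (nsphere m). 0 < y m}"
    and e: "phi0 m x = phi0 m y"
  have o: "x i = y i" if "i \<noteq> m" for i using fun_cong[OF e, of i] that unfolding phi0_def by auto
  have sx: "(\<Sum>i<m. x i ^ 2) + x m ^ 2 = 1" using x by (simp add: topspace_nsphere_eq sum_atMost_split)
  have sy: "(\<Sum>i<m. y i ^ 2) + y m ^ 2 = 1" using y by (simp add: topspace_nsphere_eq sum_atMost_split)
  have "(\<Sum>i<m. x i ^ 2) = (\<Sum>i<m. y i ^ 2)" using o by (intro sum.cong) auto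
  then have "x m ^ 2 = y m ^ 2" using sx sy by linarith
  then have "x m = y m" using x y by (simp add: power2_eq_iff)
  then show "x = y" using o by (intro ext) metis
qed

definition rho :: "nat \<Rightarrow> nat \<Rightarrow> real \<Rightarrow> (nat \<Rightarrow> real) \<Rightarrow> nat \<Rightarrow> real" where
  "rho m j s y = (\<lambda>i. if i = m then s * y j else if i = j then s * y m else y i)"

lemma rho_rho: assumes "s * s = 1" shows "rho m j s (rho m j s y) = y"
proof -
  have "s * (s * x) = x" for x using assms by (simp add: mult.assoc[symmetric])
  then show ?thesis unfolding rho_def by (intro ext) auto
qed

lemma rho_in:
  assumes "j \<le> m" "s * s = 1" "y \<in> topspace (nsphere m)"
  shows "rho m j s y \<in> topspace (nsphere m)"
proof -
  let ?t = "\<lambda>i. if i = j then m else if i = m then j else i"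
  have sq: "(rho m j s y i) ^ 2 = (y (?t i)) ^ 2" for i
    unfolding rho_def using assms(2) by (auto simp: power_mult_distrib power2_eq_square mult.assoc[symmetric])
  have "(\<Sum>i\<le>m. (rho m j s y i) ^ 2) = (\<Sum>i\<le>m. (y (?t i)) ^ 2)" using sq by simp
  also have "\<dots> = (\<Sum>i\<le>m. (y i) ^ 2)"
    by (rule sum.reindex_bij_witness[where i="?t" and j="?t"]) (use assms(1) in auto)
  finally show ?thesis using assms(3) unfolding topspace_nsphere_eq rho_def using assms(1) by auto
qed

lemma rho_cont:
  assumes "j \<le> m" "s * s = 1"
  shows "continuous_map (nsphere m) (nsphere m) (rho m j s)"
proof -
  have pr: "continuous_map (nsphere m) euclideanreal (\<lambda>x. x i)" for i
    by (rule continuous_map_nsphere_projection)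
  have "continuous_map (nsphere m) euclideanreal (\<lambda>x. rho m j s x k)" for k
    unfolding rho_def by (auto intro!: continuous_map_real_mult continuous_map_const[THEN iffD2] pr)
  then have "continuous_map (nsphere m) (powertop_real UNIV) (rho m j s)"
    by (simp add: continuous_map_componentwise_UNIV)
  moreover have "rho m j s \<in> topspace (nsphere m) \<rightarrow> topspace (nsphere m)"
    using rho_in[OF assms] by auto
  ultimately have "continuous_map (nsphere m) (subtopology (powertop_real UNIV) (topspace (nsphere m))) (rho m j s)"
    by (simp add: continuous_map_in_subtopology)
  then show ?thesis unfolding topspace_nsphere_eq by (simp add: nsphere[of m, symmetric])
qed

lemma sphere_point_rho:
  assumes "p \<in> topspace (nsphere m)"
  obtains j s where "j \<le> m" "s * s = 1" "0 < rho m j s p m"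
proof -
  have "\<exists>j\<le>m. p j \<noteq> 0"
  proof (rule ccontr)
    assume "\<not> ?thesis"
    then have "(\<Sum>i\<le>m. p i ^ 2) = 0" by auto
    then show False using assms by (simp add: topspace_nsphere_eq)
  qed
  then obtain j where j: "j \<le> m" "p j \<noteq> 0" by auto
  define s where "s = sgn (p j)"
  have "s * s = 1" using j unfolding s_def by (auto simp: sgn_if)
  moreover have "0 < rho m j s p m" unfolding rho_def s_def using j by (auto simp: sgn_if)
  ultimately show ?thesis using that j by auto
qed

lemma sphere_chart_phi:
  assumes "p \<in> topspace (nsphere m)"
  shows "\<exists>W \<phi>. openin (nsphere m) W \<and> p \<in> W \<and> continuous_map (subtopology (nsphere m) W) (Euclidean_space m) \<phi> \<and> inj_on \<phi> W"
proof -
  obtain j s where js: "j \<le> m" "s * s = 1" "0 < rho m j s p m" using sphere_point_rho[OF assms] .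
  let ?r = "rho m j s"
  define W where "W = {x \<in> topspace (nsphere m). 0 < ?r x m}"
  have cr: "continuous_map (nsphere m) (nsphere m) ?r" using rho_cont[OF js(1,2)] .
  have "openin (nsphere m) W" unfolding W_def
    by (rule openin_pos) (rule continuous_map_compose[OF cr continuous_map_nsphere_projection, unfolded o_def])
  moreover have "p \<in> W" using assms js unfolding W_def by auto
  moreover have "continuous_map (subtopology (nsphere m) W) (Euclidean_space m) (phi0 m \<circ> ?r)"
  proof (rule continuous_map_compose)
    show "continuous_map (subtopology (nsphere m) W) (subtopology (nsphere m) UNIV) ?r"
      using continuous_map_from_subtopology[OF cr] by simp
    show "continuous_map (subtopology (nsphere m) UNIV) (Euclidean_space m) (phi0 m)" by (rule phi0_cont)
  qed
  moreover have "inj_on (phi0 m \<circ> ?r) W"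
  proof (rule comp_inj_on)
    show "inj_on ?r W" by (rule inj_on_inverseI[where g="?r"]) (use rho_rho[OF js(2)] in auto)
    show "inj_on (phi0 m) (?r ` W)"
      by (rule inj_on_subset[OF phi0_inj]) (use rho_in[OF js(1,2)] in \<open>auto simp: W_def\<close>)
  qed
  ultimately show ?thesis by blast
qed

lemma sphere_chart_psi:
  assumes "p \<in> topspace (nsphere m)"
  shows "\<exists>B \<psi>. openin (Euclidean_space m) B \<and> continuous_map (subtopology (Euclidean_space m) B) (nsphere m) \<psi> \<and> inj_on \<psi> B \<and> p \<in> \<psi> ` B"
proof -
  obtain j s where js: "j \<le> m" "s * s = 1" "0 < rho m j s p m" using sphere_point_rho[OF assms] .
  let ?r = "rho m j s"
  have cr: "continuous_map (nsphere m) (nsphere m) ?r" using rho_cont[OF js(1,2)] .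
  have "continuous_map (subtopology (Euclidean_space m) (B0 m)) (nsphere m) (?r \<circ> psi0 m)"
    using continuous_map_compose[OF psi0_cont cr] .
  moreover have "inj_on (?r \<circ> psi0 m) (B0 m)"
  proof (rule comp_inj_on[OF psi0_inj])
    show "inj_on ?r (psi0 m ` B0 m)" by (rule inj_on_inverseI[where g="?r"]) (use rho_rho[OF js(2)] in auto)
  qed
  moreover have "p \<in> (?r \<circ> psi0 m) ` B0 m"
  proof -
    let ?q = "?r p"
    have q: "?q \<in> topspace (nsphere m)" using rho_in[OF js(1,2) assms] .
    have z: "phi0 m ?q \<in> B0 m"
    proof -
      have s1: "(\<Sum>i<m. ?q i ^ 2) + ?q m ^ 2 = 1" using q by (simp add: topspace_nsphere_eq sum_atMost_split)
      have "(\<Sum>i<m. phi0 m ?q i ^ 2) = (\<Sum>i<m. ?q i ^ 2)" unfolding phi0_def by (intro sum.cong) auto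
      moreover have "\<forall>i\<ge>m. phi0 m ?q i = 0" using q unfolding phi0_def topspace_nsphere_eq by auto
      ultimately show ?thesis unfolding B0_def topspace_Eucl_eq using s1 mult_pos_pos[OF js(3) js(3)] by (auto simp: power2_eq_square)
    qed
    have "psi0 m (phi0 m ?q) = ?q"
    proof -
      have "psi0 m (phi0 m ?q) \<in> {y \<in> topspace (nsphere m). 0 < y m}" using psi0_in[OF z] by auto
      moreover have "?q \<in> {y \<in> topspace (nsphere m). 0 < y m}" using q js(3) by auto
      moreover have "phi0 m (psi0 m (phi0 m ?q)) = phi0 m ?q" unfolding phi0_def psi0_def by auto
      ultimately show ?thesis using phi0_inj[of m] unfolding inj_on_def by blast
    qed
    then have "(?r \<circ> psi0 m) (phi0 m ?q) = p" using rho_rho[OF js(2)] by simp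
    then show ?thesis using z by force
  qed
  ultimately show ?thesis using openin_B0 by blast
qed

lemma iod_sphere:
  assumes V: "openin (Euclidean_space m) V"
    and g: "continuous_map (subtopology (Euclidean_space m) V) (nsphere m) g"
    and inj: "inj_on g V"
  shows "openin (nsphere m) (g ` V)"
  unfolding openin_subopen[of _ "g ` V"]
proof
  fix y assume "y \<in> g ` V"
  then obtain x where x: "x \<in> V" "y = g x" by auto
  have Vsub: "V \<subseteq> topspace (Euclidean_space m)" using openin_subset[OF V] .
  have "y \<in> topspace (nsphere m)"
    using continuous_map_image_subset_topspace[OF g] x Vsub by (auto simp: topspace_subtopology)
  then obtain W \<phi> where W: "openin (nsphere m) W" "y \<in> W"
    and \<phi>: "continuous_map (subtopology (nsphere m) W) (Euclidean_space m) \<phi>" "inj_on \<phi> W"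
    using sphere_chart_phi by blast
  define V' where "V' = {v \<in> topspace (subtopology (Euclidean_space m) V). g v \<in> W}"
  have V'o: "openin (Euclidean_space m) V'"
    unfolding V'_def by (rule openin_trans_full[OF openin_continuous_map_preimage[OF g W(1)] V])
  have V'sub: "V' \<subseteq> V" unfolding V'_def by (auto simp: topspace_subtopology)
  have gV': "continuous_map (subtopology (Euclidean_space m) V') (subtopology (nsphere m) W) g"
    unfolding continuous_map_in_subtopology
    using continuous_map_from_subtopology_mono[OF g V'sub] unfolding V'_def by (auto simp: topspace_subtopology)
  have c: "continuous_map (subtopology (Euclidean_space m) V') (Euclidean_space m) (\<phi> \<circ> g)"
    using continuous_map_compose[OF gV' \<phi>(1)] .
  have i: "inj_on (\<phi> \<circ> g) V'"
  proof (rule comp_inj_on)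
    show "inj_on g V'" using inj_on_subset[OF inj V'sub] .
    show "inj_on \<phi> (g ` V')" by (rule inj_on_subset[OF \<phi>(2)]) (auto simp: V'_def)
  qed
  have O: "openin (Euclidean_space m) ((\<phi> \<circ> g) ` V')"
    by (rule invariance_of_domain_Euclidean_space[OF V'o c i])
  define T where "T = {z \<in> topspace (subtopology (nsphere m) W). \<phi> z \<in> (\<phi> \<circ> g) ` V'}"
  have "openin (nsphere m) T"
    unfolding T_def by (rule openin_trans_full[OF openin_continuous_map_preimage[OF \<phi>(1) O] W(1)])
  moreover have "y \<in> T"
  proof -
    have "x \<in> V'" unfolding V'_def using x W Vsub by (auto simp: topspace_subtopology)
    then show ?thesis unfolding T_def using x W \<open>y \<in> topspace (nsphere m)\<close> by (auto simp: topspace_subtopology)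
  qed
  moreover have "T \<subseteq> g ` V"
  proof
    fix z assume "z \<in> T"
    then obtain v where v: "v \<in> V'" "\<phi> z = \<phi> (g v)" "z \<in> W" unfolding T_def by (auto simp: topspace_subtopology)
    have "g v \<in> W" using v(1) unfolding V'_def by auto
    then have "z = g v" using \<phi>(2) v unfolding inj_on_def by blast
    then show "z \<in> g ` V" using v(1) V'sub by auto
  qed
  ultimately show "\<exists>T. openin (nsphere m) T \<and> y \<in> T \<and> T \<subseteq> g ` V" by blast
qed

lemma loc_sphere:
  assumes A: "openin (nsphere m) A" and p: "p \<in> A"
  shows "\<exists>B e. openin (Euclidean_space m) B \<and> continuous_map (subtopology (Euclidean_space m) B) (nsphere m) e
     \<and> inj_on e B \<and> e ` B \<subseteq> A \<and> p \<in> e ` B"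
proof -
  have "p \<in> topspace (nsphere m)" using openin_subset[OF A] p by auto
  from sphere_chart_psi[OF this] obtain B \<psi> where B: "openin (Euclidean_space m) B" and \<psi>: "continuous_map (subtopology (Euclidean_space m) B) (nsphere m) \<psi>"
    "inj_on \<psi> B" "p \<in> \<psi> ` B"
    by blast
  define B' where "B' = {z \<in> topspace (subtopology (Euclidean_space m) B). \<psi> z \<in> A}"
  have B'o: "openin (Euclidean_space m) B'"
    unfolding B'_def by (rule openin_trans_full[OF openin_continuous_map_preimage[OF \<psi>(1) A] B])
  have B'sub: "B' \<subseteq> B" unfolding B'_def by (auto simp: topspace_subtopology)
  have "continuous_map (subtopology (Euclidean_space m) B') (nsphere m) \<psi>"
    using continuous_map_from_subtopology_mono[OF \<psi>(1) B'sub] .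
  moreover have "inj_on \<psi> B'" using inj_on_subset[OF \<psi>(2) B'sub] .
  moreover have "\<psi> ` B' \<subseteq> A" unfolding B'_def by auto
  moreover have "p \<in> \<psi> ` B'"
  proof -
    obtain z where z: "z \<in> B" "p = \<psi> z" using \<psi>(3) by auto
    have "z \<in> topspace (Euclidean_space m)" using z(1) openin_subset[OF B] by blast
    then have "z \<in> B'" unfolding B'_def using z p by (simp add: topspace_subtopology)
    then show ?thesis using z(2) by blast
  qed
  ultimately show ?thesis using B'o by (intro exI[of _ B'] exI[of _ \<psi>]) simp
qed

lemma iod_X:
  assumes X: "X homeomorphic_space nsphere m"
    and V: "openin (Euclidean_space m) V"
    and g: "continuous_map (subtopology (Euclidean_space m) V) X g"
    and inj: "inj_on g V"
  shows "openin X (g ` V)"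
proof -
  obtain h k where hk: "homeomorphic_maps X (nsphere m) h k" using X unfolding homeomorphic_space_def by auto
  have h: "continuous_map X (nsphere m) h" and hinv: "\<forall>x\<in>topspace X. k (h x) = x"
    using hk unfolding homeomorphic_maps_def by auto
  have Vsub: "V \<subseteq> topspace (Euclidean_space m)" using openin_subset[OF V] .
  have gV: "g ` V \<subseteq> topspace X"
    using continuous_map_image_subset_topspace[OF g] Vsub by (auto simp: topspace_subtopology)
  have "openin (nsphere m) ((h \<circ> g) ` V)"
  proof (rule iod_sphere[OF V continuous_map_compose[OF g h]])
    show "inj_on (h \<circ> g) V"
    proof (rule inj_onI)
      fix u v assume uv: "u \<in> V" "v \<in> V" "(h \<circ> g) u = (h \<circ> g) v"
      have "g u \<in> topspace X" "g v \<in> topspace X" using gV uv by auto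
      then have "g u = g v" using hinv uv(3) by (metis comp_apply)
      then show "u = v" using inj uv unfolding inj_on_def by blast
    qed
  qed
  from openin_continuous_map_preimage[OF h this]
  have "openin X {x \<in> topspace X. h x \<in> (h \<circ> g) ` V}" .
  moreover have "{x \<in> topspace X. h x \<in> (h \<circ> g) ` V} = g ` V"
  proof safe
    fix x v assume "x \<in> topspace X" "v \<in> V" "h x = (h \<circ> g) v"
    then have "k (h x) = k (h (g v))" by simp
    then have "x = g v" using hinv \<open>x \<in> topspace X\<close> gV \<open>v \<in> V\<close> by auto
    then show "x \<in> g ` V" using \<open>v \<in> V\<close> by auto
  qed (use gV in auto)
  ultimately show ?thesis by simp
qed

lemma loc_X:
  assumes X: "X homeomorphic_space nsphere m"
    and A: "openin X A" and p: "p \<in> A"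
  shows "\<exists>B e. openin (Euclidean_space m) B \<and> continuous_map (subtopology (Euclidean_space m) B) X e
     \<and> inj_on e B \<and> e ` B \<subseteq> A \<and> p \<in> e ` B"
proof -
  obtain h k where hk: "homeomorphic_maps X (nsphere m) h k" using X unfolding homeomorphic_space_def by auto
  have h: "continuous_map X (nsphere m) h" and k: "continuous_map (nsphere m) X k"
    and hinv: "\<forall>x\<in>topspace X. k (h x) = x" and kinv: "\<forall>y\<in>topspace (nsphere m). h (k y) = y"
    using hk unfolding homeomorphic_maps_def by auto
  have Asub: "A \<subseteq> topspace X" using openin_subset[OF A] .
  define A' where "A' = {y \<in> topspace (nsphere m). k y \<in> A}"
  have A'o: "openin (nsphere m) A'" unfolding A'_def by (rule openin_continuous_map_preimage[OF k A])
  have "h p \<in> A'" unfolding A'_def using hinv p Asub continuous_map_image_subset_topspace[OF h] by auto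
  from loc_sphere[OF A'o this] obtain B e where B: "openin (Euclidean_space m) B" and e: "continuous_map (subtopology (Euclidean_space m) B) (nsphere m) e"
    "inj_on e B" "e ` B \<subseteq> A'" "h p \<in> e ` B"
    by blast
  have "continuous_map (subtopology (Euclidean_space m) B) X (k \<circ> e)" using continuous_map_compose[OF e(1) k] .
  moreover have "inj_on (k \<circ> e) B"
  proof (rule comp_inj_on[OF e(2)])
    show "inj_on k (e ` B)"
    proof (rule inj_onI)
      fix u v assume uv: "u \<in> e ` B" "v \<in> e ` B" "k u = k v"
      have "u \<in> topspace (nsphere m)" "v \<in> topspace (nsphere m)" using uv e(3) unfolding A'_def by auto
      then show "u = v" using kinv uv(3) by metis
    qed
  qed
  moreover have "(k \<circ> e) ` B \<subseteq> A" using e(3) unfolding A'_def by auto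
  moreover have "p \<in> (k \<circ> e) ` B"
  proof -
    obtain z where "z \<in> B" "h p = e z" using e(4) by auto
    have "p \<in> topspace X" using p Asub by blast
    then have "k (e z) = p" using hinv \<open>h p = e z\<close> by metis
    then show ?thesis using \<open>z \<in> B\<close> by force
  qed
  ultimately show ?thesis using B by (intro exI[of _ B] exI[of _ "k \<circ> e"]) simp
qed


lemma face_in_facet:
  assumes "simplicial_complex D" "\<sigma> \<in> D"
  shows "\<exists>T\<in>facets D. \<sigma> \<subseteq> T"
proof -
  have fin: "finite D" using assms(1) unfolding simplicial_complex_def by auto
  let ?C = "{F\<in>D. \<sigma> \<subseteq> F}"
  have "finite ?C" "?C \<noteq> {}" using fin assms(2) by auto
  have fins: "\<forall>F\<in>D. finite F" using assms(1) unfolding simplicial_complex_def by auto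
  obtain T where T: "T \<in> ?C" "\<forall>F\<in>?C. card F \<le> card T"
  proof -
    have "Max (card ` ?C) \<in> card ` ?C" using \<open>finite ?C\<close> \<open>?C \<noteq> {}\<close> by (intro Max_in) auto
    then obtain T where "T \<in> ?C" "card T = Max (card ` ?C)" by auto
    moreover have "\<forall>F\<in>?C. card F \<le> Max (card ` ?C)" using \<open>finite ?C\<close> by auto
    ultimately show ?thesis using that by auto
  qed
  have "\<forall>G\<in>D. T \<subseteq> G \<longrightarrow> G = T"
  proof (intro ballI impI)
    fix G assume "G \<in> D" "T \<subseteq> G"
    then have "G \<in> ?C" using T by auto
    then have "card G \<le> card T" using T by auto
    then show "G = T" using \<open>T \<subseteq> G\<close> fins \<open>G \<in> D\<close>
      by (metis card_seteq)
  qed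
  then have "T \<in> facets D" unfolding facets_def using T by auto
  then show ?thesis using T by auto
qed

locale pm =
  fixes d :: nat and D :: "'a set set"
  assumes sc: "simplicial_complex D"
    and fcard: "\<And>T. T \<in> facets D \<Longrightarrow> card T = d"
    and d3: "d \<ge> 3"
    and pmf: "\<And>T a. T \<in> facets D \<Longrightarrow> a \<in> T \<Longrightarrow> \<exists>!U. U \<in> facets D \<and> U \<noteq> T \<and> T - {a} \<subseteq> U"
begin

lemma facet_in: "T \<in> facets D \<Longrightarrow> T \<in> D" unfolding facets_def by auto

lemma facet_fin: "T \<in> facets D \<Longrightarrow> finite T"
  using sc facet_in unfolding simplicial_complex_def by auto

definition nb :: "'a set \<Rightarrow> 'a \<Rightarrow> 'a set" where
  "nb T a = (THE U. U \<in> facets D \<and> U \<noteq> T \<and> T - {a} \<subseteq> U)"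

lemma nb_prop:
  assumes "T \<in> facets D" "a \<in> T"
  shows "nb T a \<in> facets D" "nb T a \<noteq> T" "T - {a} \<subseteq> nb T a"
  using theI'[OF pmf[OF assms]] unfolding nb_def by auto

lemma nb_unique:
  assumes "T \<in> facets D" "a \<in> T" "U \<in> facets D" "U \<noteq> T" "T - {a} \<subseteq> U"
  shows "nb T a = U"
  using pmf[OF assms(1,2)] nb_prop[OF assms(1,2)] assms(3-5) by blast

lemma facet_sub_eq:
  assumes "T \<in> facets D" "U \<in> facets D" "T \<subseteq> U" shows "T = U"
  using assms facet_fin fcard by (metis card_subset_eq)

lemma nb_notin:
  assumes "T \<in> facets D" "a \<in> T" shows "a \<notin> nb T a"
proof
  assume "a \<in> nb T a"
  then have "T \<subseteq> nb T a" using nb_prop(3)[OF assms] by auto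
  then show False using facet_sub_eq[OF assms(1) nb_prop(1)[OF assms]] nb_prop(2)[OF assms] by auto
qed

lemma nb_inter:
  assumes "T \<in> facets D" "a \<in> T" shows "T \<inter> nb T a = T - {a}"
  using nb_notin[OF assms] nb_prop(3)[OF assms] by auto

lemma nb_adj:
  assumes "T \<in> facets D" "a \<in> T" shows "fr_adj d D T (nb T a)"
proof -
  have "card (T - {a}) = d - 1" using assms fcard facet_fin by auto
  then show ?thesis unfolding fr_adj_def using nb_prop[OF assms] nb_inter[OF assms] assms by auto
qed

lemma adj_nb:
  assumes "fr_adj d D T U"
  shows "\<exists>a\<in>T. U = nb T a \<and> a \<notin> U"
proof -
  have T: "T \<in> facets D" and U: "U \<in> facets D" "U \<noteq> T" and c: "card (T \<inter> U) = d - 1"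
    using assms unfolding fr_adj_def by auto
  have "\<not> T \<subseteq> U" using facet_sub_eq[OF T U(1)] U(2) by auto
  then obtain a where a: "a \<in> T" "a \<notin> U" by auto
  have fT: "finite T" using facet_fin T by auto
  have "T \<inter> U \<subseteq> T - {a}" using a by auto
  moreover have "card (T - {a}) = d - 1" using a fT fcard[OF T] by auto
  ultimately have "T \<inter> U = T - {a}" using c fT by (metis card_subset_eq finite_Diff)
  then have "T - {a} \<subseteq> U" by auto
  then show ?thesis using nb_unique[OF T a(1) U(1) U(2)] a by auto
qed

lemma nb_inj:
  assumes "T \<in> facets D" shows "inj_on (nb T) T"
proof (rule inj_onI)
  fix a b assume ab: "a \<in> T" "b \<in> T" "nb T a = nb T b"
  show "a = b"
  proof (rule ccontr)
    assume "a \<noteq> b"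
    then have "T \<subseteq> nb T a" using nb_prop(3)[OF assms ab(1)] nb_prop(3)[OF assms ab(2)] ab(3) by auto
    then show False using facet_sub_eq[OF assms nb_prop(1)[OF assms ab(1)]] nb_prop(2)[OF assms ab(1)] by auto
  qed
qed

lemma nbrs_in_Vk:
  assumes "T \<in> facets D" "\<sigma> \<subseteq> T"
  shows "{u\<in>Vk D \<sigma>. fr_adj d D T u} = nb T ` (T - \<sigma>)"
proof safe
  fix u assume u: "u \<in> Vk D \<sigma>" "fr_adj d D T u"
  obtain a where a: "a \<in> T" "u = nb T a" "a \<notin> u" using adj_nb[OF u(2)] by auto
  have "a \<notin> \<sigma>" using u(1) a unfolding Vk_def by auto
  then show "u \<in> nb T ` (T - \<sigma>)" using a by auto
next
  fix a assume a: "a \<in> T" "a \<notin> \<sigma>"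
  show "nb T a \<in> Vk D \<sigma>" unfolding Vk_def using nb_prop[OF assms(1) a(1)] a assms(2) by auto
  show "fr_adj d D T (nb T a)" using nb_adj[OF assms(1) a(1)] .
qed

lemma card_nbrs_in_Vk:
  assumes "T \<in> facets D" "\<sigma> \<subseteq> T"
  shows "card {u\<in>Vk D \<sigma>. fr_adj d D T u} = card (T - \<sigma>)"
  unfolding nbrs_in_Vk[OF assms]
  by (rule card_image) (meson Diff_subset assms(1) inj_on_subset nb_inj)


lemma facet_of_Vk: "t \<in> Vk D \<sigma> \<Longrightarrow> t \<in> facets D \<and> \<sigma> \<subseteq> t"
  unfolding Vk_def by auto

lemma sink_unique_good:
  assumes "good_orientation d D Or" "\<sigma> \<in> D" "card \<sigma> = d - k" "k \<le> d"
  shows "\<exists>!t. is_sink Or (Vk D \<sigma>) t"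
  using assms unfolding good_orientation_def by auto

lemma principal_root_sink:
  assumes "good_orientation d D Or" "\<sigma> \<in> D" "card \<sigma> = d - k" "k \<le> d"
  shows "is_sink Or (Vk D \<sigma>) (principal_root Or D \<sigma>)"
  unfolding principal_root_def using theI'[OF sink_unique_good[OF assms]] .

lemma principal_frame:
  assumes "good_orientation d D Or" "\<sigma> \<in> D" "card \<sigma> = d - k" "k \<le> d"
  shows "k_frame d D k (principal_root Or D \<sigma>) (principal_leaves d D Or \<sigma>)"
proof -
  let ?t = "principal_root Or D \<sigma>"
  have t: "?t \<in> facets D" "\<sigma> \<subseteq> ?t"
    using principal_root_sink[OF assms] facet_of_Vk unfolding is_sink_def by auto
  have "card (?t - \<sigma>) = k"
    using t fcard facet_fin assms(3,4) by (simp add: card_Diff_subset finite_subset)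
  then show ?thesis unfolding k_frame_def principal_leaves_def
    using card_nbrs_in_Vk[OF t] t by auto
qed

lemma sys_of_face_in:
  assumes "k_system d D k SS" "good_orientation d D Or" "\<sigma> \<in> D" "card \<sigma> = d - k" "k \<le> d"
  shows "sys_of_face d D Or SS \<sigma> \<in> SS \<and> insert (principal_root Or D \<sigma>) (principal_leaves d D Or \<sigma>) \<subseteq> sys_of_face d D Or SS \<sigma>"
proof -
  have "\<exists>!S. S \<in> SS \<and> insert (principal_root Or D \<sigma>) (principal_leaves d D Or \<sigma>) \<subseteq> S"
    using assms(1) principal_frame[OF assms(2-5)] unfolding k_system_def by auto
  from theI'[OF this] show ?thesis unfolding sys_of_face_def .
qed

lemma S_is_sys:
  assumes sl: "star_like d D k SS" and go: "good_orientation d D Or" and ac: "acyclic_orientation Or"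
    and k: "k \<le> d" and S: "S \<in> SS"
  shows "\<exists>\<sigma>. \<sigma> \<in> D \<and> card \<sigma> = d - k \<and> S = sys_of_face d D Or SS \<sigma>"
proof -
  have ks: "k_system d D k SS" using sl unfolding star_like_def by auto
  obtain t where t: "is_sink Or S t" using sl go ac S unfolding star_like_def by blast
  have reg: "k_regular_on d D k S" using ks S unfolding k_system_def by auto
  have tS: "t \<in> S" and tF: "t \<in> facets D" using t reg unfolding is_sink_def k_regular_on_def by auto
  define N where "N = {u\<in>S. fr_adj d D t u}"
  have cN: "card N = k" using reg tS unfolding N_def k_regular_on_def by auto
  define X where "X = {a\<in>t. nb t a \<in> N}"
  have NX: "N = nb t ` X"
  proof safe
    fix u assume "u \<in> N"
    then obtain a where "a \<in> t" "u = nb t a" using adj_nb unfolding N_def by blast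
    then show "u \<in> nb t ` X" using \<open>u \<in> N\<close> unfolding X_def by auto
  qed (auto simp: X_def)
  have cX: "card X = k" using cN NX card_image inj_on_subset[OF nb_inj[OF tF]] X_def
    by (metis (no_types, lifting) mem_Collect_eq subsetI)
  define \<sigma> where "\<sigma> = t - X"
  have ft: "finite t" using facet_fin tF .
  have Xt: "X \<subseteq> t" unfolding X_def by auto
  have sig_t: "\<sigma> \<subseteq> t" unfolding \<sigma>_def by auto
  have csig: "card \<sigma> = d - k" unfolding \<sigma>_def using card_Diff_subset[OF finite_subset[OF Xt ft] Xt] cX fcard[OF tF] by auto
  have sigD: "\<sigma> \<in> D" using sig_t facet_in[OF tF] sc unfolding simplicial_complex_def by blast
  have tsig: "t - \<sigma> = X" unfolding \<sigma>_def using Xt by auto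
  have nbrs: "{u\<in>Vk D \<sigma>. fr_adj d D t u} = N" using nbrs_in_Vk[OF tF sig_t] tsig NX by simp
  have sink: "is_sink Or (Vk D \<sigma>) t"
    unfolding is_sink_def
  proof
    show "t \<in> Vk D \<sigma>" unfolding Vk_def using tF sig_t by auto
    show "\<forall>u\<in>Vk D \<sigma>. \<not> Or t u"
    proof (intro ballI notI)
      fix u assume u: "u \<in> Vk D \<sigma>" "Or t u"
      then have "fr_adj d D t u" using go unfolding good_orientation_def orientation_def by auto
      then have "u \<in> N" using nbrs u by auto
      then have "u \<in> S" unfolding N_def by auto
      then show False using t u(2) unfolding is_sink_def by auto
    qed
  qed
  have root: "principal_root Or D \<sigma> = t"
    using sink_unique_good[OF go sigD csig k] sink principal_root_sink[OF go sigD csig k] by auto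
  have leaves: "principal_leaves d D Or \<sigma> = N"
    unfolding principal_leaves_def root using nbrs .
  have sub: "insert t N \<subseteq> S" using tS unfolding N_def by auto
  have "sys_of_face d D Or SS \<sigma> \<in> SS" "insert t N \<subseteq> sys_of_face d D Or SS \<sigma>"
    using sys_of_face_in[OF ks go sigD csig k] root leaves by auto
  moreover have "k_frame d D k t N" unfolding k_frame_def using tF cN unfolding N_def by auto
  ultimately have "S = sys_of_face d D Or SS \<sigma>"
    using ks S sub unfolding k_system_def by blast
  then show ?thesis using sigD csig by auto
qed

lemma SS_eq:
  assumes sl: "star_like d D k SS" and go: "good_orientation d D Or" and ac: "acyclic_orientation Or"
    and k: "k \<le> d"
  shows "SS = {sys_of_face d D Or SS \<sigma> | \<sigma>. \<sigma> \<in> D \<and> card \<sigma> = d - k}"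
proof
  show "SS \<subseteq> {sys_of_face d D Or SS \<sigma> | \<sigma>. \<sigma> \<in> D \<and> card \<sigma> = d - k}"
    using S_is_sys[OF sl go ac k] by blast
  have ks: "k_system d D k SS" using sl unfolding star_like_def by auto
  show "{sys_of_face d D Or SS \<sigma> | \<sigma>. \<sigma> \<in> D \<and> card \<sigma> = d - k} \<subseteq> SS"
    using sys_of_face_in[OF ks go _ _ k] by blast
qed

lemma main:
  assumes sl: "star_like d D k SS" and go: "good_orientation d D Or" and ac: "acyclic_orientation Or"
    and k: "k \<le> d"
  shows "SS = {sys_of_face d D Or SS \<sigma> | \<sigma>. \<sigma> \<in> D \<and> card \<sigma> = d - k}
    \<and> (\<forall>SS'. star_like d D k SS' \<longrightarrow>
          (SS = SS' \<longleftrightarrow> (\<forall>\<sigma>\<in>D. card \<sigma> = d - k \<longrightarrow>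
              sys_of_face d D Or SS \<sigma> = sys_of_face d D Or SS' \<sigma>)))"
proof (intro conjI allI impI)
  show "SS = {sys_of_face d D Or SS \<sigma> | \<sigma>. \<sigma> \<in> D \<and> card \<sigma> = d - k}" using SS_eq[OF assms] .
  fix SS' assume sl': "star_like d D k SS'"
  show "(SS = SS') = (\<forall>\<sigma>\<in>D. card \<sigma> = d - k \<longrightarrow> sys_of_face d D Or SS \<sigma> = sys_of_face d D Or SS' \<sigma>)"
  proof
    assume "SS = SS'" then show "\<forall>\<sigma>\<in>D. card \<sigma> = d - k \<longrightarrow> sys_of_face d D Or SS \<sigma> = sys_of_face d D Or SS' \<sigma>" by auto
  next
    assume h: "\<forall>\<sigma>\<in>D. card \<sigma> = d - k \<longrightarrow> sys_of_face d D Or SS \<sigma> = sys_of_face d D Or SS' \<sigma>"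
    have "{sys_of_face d D Or SS \<sigma> | \<sigma>. \<sigma> \<in> D \<and> card \<sigma> = d - k} = {sys_of_face d D Or SS' \<sigma> | \<sigma>. \<sigma> \<in> D \<and> card \<sigma> = d - k}"
      using h by blast
    then show "SS = SS'" using SS_eq[OF assms] SS_eq[OF sl' go ac k] by simp
  qed
qed
end



lemma geom_top: "topspace (geom_realization D) = {f. (\<forall>v. 0 \<le> f v) \<and> {v. f v \<noteq> 0} \<in> D \<and> sum f {v. f v \<noteq> 0} = 1}"
  by (simp add: geom_realization_def)

lemma geom_proj: "continuous_map (geom_realization D) euclideanreal (\<lambda>f. f v)"
  unfolding geom_realization_def
  by (rule continuous_map_from_subtopology) (rule continuous_map_product_projection, simp)

lemma geom_cont_into:
  assumes "\<And>v. continuous_map Y euclideanreal (\<lambda>y. g y v)" "\<And>y. y \<in> topspace Y \<Longrightarrow> g y \<in> topspace (geom_realization D)"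
  shows "continuous_map Y (geom_realization D) g"
proof -
  have "continuous_map Y (powertop_real UNIV) g" using assms(1) by (simp add: continuous_map_componentwise_UNIV)
  then show ?thesis unfolding geom_realization_def continuous_map_in_subtopology
    using assms(2) unfolding geom_top by auto
qed

lemma geom_mem:
  assumes "simplicial_complex D" "F \<in> D" "\<forall>v. 0 \<le> f v" "{v. f v \<noteq> 0} \<subseteq> F" "sum f F = 1"
  shows "f \<in> topspace (geom_realization D)"
proof -
  have fin: "finite F" using assms(1,2) unfolding simplicial_complex_def by auto
  have "{v. f v \<noteq> 0} \<in> D" using assms(1,2,4) unfolding simplicial_complex_def by blast
  moreover have "sum f {v. f v \<noteq> 0} = sum f F"
    by (rule sum.mono_neutral_left[OF fin assms(4)]) auto
  ultimately show ?thesis unfolding geom_top using assms by auto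
qed

lemma geom_sum:
  assumes "f \<in> topspace (geom_realization D)" "{v. f v \<noteq> 0} \<subseteq> F" "finite F"
  shows "sum f F = 1"
proof -
  have "sum f {v. f v \<noteq> 0} = sum f F"
    by (rule sum.mono_neutral_left[OF assms(3) assms(2)]) auto
  then show ?thesis using assms(1) unfolding geom_top by auto
qed

lemma open_pos_point:
  assumes "openin euclideanreal P" "(0::real) \<in> P"
  shows "\<exists>t>0. t \<in> P \<and> -t \<in> P"
proof -
  have "open P" using assms(1) by simp
  then obtain e where e: "e > 0" "\<forall>y. dist y 0 < e \<longrightarrow> y \<in> P" using assms(2) unfolding open_dist by blast
  then have "e/2 \<in> P" "-(e/2) \<in> P" by (auto simp: dist_real_def)
  then show ?thesis using e(1) by (intro exI[of _ "e/2"]) auto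
qed

lemma openin_E_pos:
  assumes "finite I" "\<And>i. i \<in> I \<Longrightarrow> continuous_map X euclideanreal (f i)"
  shows "openin X {x \<in> topspace X. \<forall>i\<in>I. 0 < f i x}"
proof -
  have "openin X ((\<Inter>i\<in>I. {x \<in> topspace X. 0 < f i x}) \<inter> topspace X)"
    by (rule openin_INT[OF assms(1)]) (rule openin_pos[OF assms(2)])
  moreover have "(\<Inter>i\<in>I. {x \<in> topspace X. 0 < f i x}) \<inter> topspace X = {x \<in> topspace X. \<forall>i\<in>I. 0 < f i x}"
    by auto
  ultimately show ?thesis by simp
qed



lemma ridge_ge2:
  assumes sc: "simplicial_complex D" and fc: "\<And>T. T \<in> facets D \<Longrightarrow> card T = d" and d3: "d \<ge> 3"
    and X: "geom_realization D homeomorphic_space nsphere (d - 1)"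
    and T: "T \<in> facets D" and a: "a \<in> T"
  shows "\<exists>U. U \<in> facets D \<and> U \<noteq> T \<and> T - {a} \<subseteq> U"
proof (rule ccontr)
  assume no: "\<not> ?thesis"
  define m where "m = d - 1"
  have m2: "m \<ge> 2" using d3 unfolding m_def by auto
  define R where "R = T - {a}"
  have TD: "T \<in> D" using T unfolding facets_def by auto
  have finT: "finite T" using sc TD unfolding simplicial_complex_def by auto
  have cR: "card R = m" unfolding R_def m_def using fc[OF T] a finT by auto
  have finR: "finite R" using finT unfolding R_def by auto
  obtain r0 where r0: "r0 \<in> R" using cR m2 by (metis card.empty ex_in_conv not_numeral_le_zero)
  define R' where "R' = R - {r0}"
  have cR': "card R' = m - 1" unfolding R'_def using cR r0 finR by auto
  obtain \<iota> where \<iota>: "bij_betw \<iota> {..<m-1} R'"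
    using ex_bij_betw_nat_finite[of R'] finR cR' unfolding R'_def by (auto simp: atLeast0LessThan)
  have RD: "R \<in> D" using sc TD unfolding simplicial_complex_def R_def by blast
  define A where "A = {f \<in> topspace (geom_realization D). \<forall>r\<in>R. 0 < f r}"
  have Ao: "openin (geom_realization D) A"
    unfolding A_def by (rule openin_E_pos[OF finR]) (rule geom_proj)
  have suppA: "{v. f v \<noteq> 0} \<subseteq> T" if "f \<in> A" for f
  proof -
    have s: "{v. f v \<noteq> 0} \<in> D" using that unfolding A_def geom_top by auto
    have "R \<subseteq> {v. f v \<noteq> 0}" using that unfolding A_def by auto
    obtain U where U: "U \<in> facets D" "{v. f v \<noteq> 0} \<subseteq> U" using face_in_facet[OF sc s] by auto
    then have "U = T" using no \<open>R \<subseteq> {v. f v \<noteq> 0}\<close> unfolding R_def by blast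
    then show ?thesis using U by auto
  qed
  define f0 where "f0 = (\<lambda>v. if v \<in> R then 1 / real m else 0)"
  have f0A: "f0 \<in> A"
  proof -
    have "f0 \<in> topspace (geom_realization D)"
      by (rule geom_mem[OF sc RD]) (use cR m2 in \<open>auto simp: f0_def\<close>)
    then show ?thesis unfolding A_def f0_def using m2 by auto
  qed
  from loc_X[OF X Ao f0A] obtain B e where B: "openin (Euclidean_space (d-1)) B"
    and e: "continuous_map (subtopology (Euclidean_space (d-1)) B) (geom_realization D) e"
      "inj_on e B" "e ` B \<subseteq> A" "f0 \<in> e ` B"
    by blast
  define \<kappa> where "\<kappa> = (\<lambda>f::'a \<Rightarrow> real. \<lambda>i. if i < m then (if i < m - 1 then f (\<iota> i) else f a) else 0)"
  have cF: "continuous_map (subtopology (Euclidean_space m) B) (Euclidean_space m) (\<kappa> \<circ> e)"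
  proof -
    have ce: "continuous_map (subtopology (Euclidean_space m) B) euclideanreal (\<lambda>x. e x v)" for v
      using continuous_map_compose[OF e(1) geom_proj[of D v]] unfolding m_def by (simp add: o_def)
    have "continuous_map (subtopology (Euclidean_space m) B) (Euclidean_space m)
       (\<lambda>x i. if i < m then (if i < m - 1 then e x (\<iota> i) else e x a) else 0)"
      unfolding continuous_map_componentwise_Euclidean_space using ce by auto
    then show ?thesis unfolding \<kappa>_def o_def .
  qed
  have \<kappa>inj: "inj_on \<kappa> A"
  proof (rule inj_onI)
    fix f g assume f: "f \<in> A" and g: "g \<in> A" and fg: "\<kappa> f = \<kappa> g"
    have agree1: "f v = g v" if vR: "v \<in> R'" for v
    proof -
      obtain i where i: "i < m - 1" "v = \<iota> i" using \<iota> vR unfolding bij_betw_def by auto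
      have "i < m" using i(1) by auto
      then show ?thesis using fun_cong[OF fg, of i] i unfolding \<kappa>_def by simp
    qed
    have agree2: "f a = g a" using fun_cong[OF fg, of "m-1"] m2 unfolding \<kappa>_def by auto
    have Tsplit: "T = insert r0 (insert a R')" using a r0 unfolding R'_def R_def by auto
    have nin: "r0 \<notin> insert a R'" "a \<notin> R'" using r0 unfolding R'_def R_def by auto
    have finR': "finite R'" using finR unfolding R'_def by auto
    have sf: "sum f T = 1" using geom_sum[OF _ suppA[OF f] finT] f unfolding A_def by auto
    have sg: "sum g T = 1" using geom_sum[OF _ suppA[OF g] finT] g unfolding A_def by auto
    have "sum f R' = sum g R'" using agree1 by (rule sum.cong[OF refl])
    then have "f r0 = g r0" using sf sg agree2 unfolding Tsplit using nin finR' by simp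
    show "f = g"
    proof
      fix v show "f v = g v"
      proof (cases "v \<in> T")
        case True then show ?thesis using agree1 agree2 \<open>f r0 = g r0\<close> unfolding Tsplit by auto
      next
        case False
        then have "f v = 0" "g v = 0" using suppA[OF f] suppA[OF g] by auto
        then show ?thesis by simp
      qed
    qed
  qed
  have iF: "inj_on (\<kappa> \<circ> e) B" by (rule comp_inj_on[OF e(2) inj_on_subset[OF \<kappa>inj e(3)]])
  have Bm: "openin (Euclidean_space m) B" using B unfolding m_def .
  have O: "openin (Euclidean_space m) ((\<kappa> \<circ> e) ` B)"
    by (rule invariance_of_domain_Euclidean_space[OF Bm cF iF])
  have nonneg: "z (m - 1) \<ge> 0" if zB: "z \<in> (\<kappa> \<circ> e) ` B" for z
  proof -
    obtain x where x: "x \<in> B" "z = \<kappa> (e x)" using zB by auto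
    have "e x \<in> topspace (geom_realization D)" using e(3) x(1) unfolding A_def by auto
    then show ?thesis using x m2 unfolding \<kappa>_def geom_top by auto
  qed
  define z0 where "z0 = \<kappa> f0"
  have z0: "z0 \<in> (\<kappa> \<circ> e) ` B" using e(4) unfolding z0_def by auto
  define c where "c = (\<lambda>t::real. \<lambda>i. if i < m then (if i = m - 1 then - t else z0 i) else 0)"
  have cc: "continuous_map euclideanreal (Euclidean_space m) c"
    unfolding c_def continuous_map_componentwise_Euclidean_space by (auto intro: continuous_intros)
  have c0: "c 0 = z0"
  proof
    fix i show "c 0 i = z0 i"
      unfolding c_def z0_def \<kappa>_def f0_def using a m2 by (auto simp: R_def)
  qed
  have P: "openin euclideanreal {t \<in> topspace euclideanreal. c t \<in> (\<kappa> \<circ> e) ` B}"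
    by (rule openin_continuous_map_preimage[OF cc O])
  have "0 \<in> {t \<in> topspace euclideanreal. c t \<in> (\<kappa> \<circ> e) ` B}" using c0 z0 by auto
  from open_pos_point[OF P this] obtain t where t: "t > 0" "c t \<in> (\<kappa> \<circ> e) ` B" by auto
  have "c t (m - 1) = - t" unfolding c_def using m2 by auto
  then show False using nonneg[OF t(2)] t(1) by auto
qed


lemma ridge_le2:
  assumes sc: "simplicial_complex D" and fc: "\<And>T. T \<in> facets D \<Longrightarrow> card T = d" and d3: "d \<ge> 3"
    and X: "geom_realization D homeomorphic_space nsphere (d - 1)"
    and T: "T \<in> facets D" and a: "a \<in> T"
    and U1: "U1 \<in> facets D" "U1 \<noteq> T" "T - {a} \<subseteq> U1"
    and U2: "U2 \<in> facets D" "U2 \<noteq> T" "T - {a} \<subseteq> U2" and U12: "U1 \<noteq> U2"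
  shows False
proof -
  define m where "m = d - 1"
  have m2: "m \<ge> 2" using d3 unfolding m_def by auto
  define R where "R = T - {a}"
  have TD: "T \<in> D" using T unfolding facets_def by auto
  have finT: "finite T" using sc TD unfolding simplicial_complex_def by auto
  have cR: "card R = m" unfolding R_def m_def using fc[OF T] a finT by auto
  have finR: "finite R" using finT unfolding R_def by auto
  have extra: "\<exists>b. U = insert b R \<and> b \<notin> R" if U: "U \<in> facets D" "R \<subseteq> U" for U
  proof -
    have UD: "U \<in> D" using U unfolding facets_def by auto
    have finU: "finite U" using sc UD unfolding simplicial_complex_def by auto
    have "card (U - R) = 1" using card_Diff_subset[OF finR U(2)] fc[OF U(1)] cR unfolding m_def using d3 by auto
    then obtain b where "U - R = {b}" by (auto simp: card_Suc_eq)
    then show ?thesis using U(2) by auto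
  qed
  obtain b where b: "U1 = insert b R" "b \<notin> R" using extra U1 unfolding R_def by blast
  obtain c where c: "U2 = insert c R" "c \<notin> R" using extra U2 unfolding R_def by blast
  have Ta: "T = insert a R" using a unfolding R_def by auto
  have ba: "b \<noteq> a" using b Ta U1(2) by auto
  have ca: "c \<noteq> a" using c Ta U2(2) by auto
  have cb: "c \<noteq> b" using b c U12 by auto
  have aR: "a \<notin> R" unfolding R_def by auto
  obtain r0 where r0: "r0 \<in> R" using cR m2 by (metis card.empty ex_in_conv not_numeral_le_zero)
  define R' where "R' = R - {r0}"
  have cR': "card R' = m - 1" unfolding R'_def using cR r0 finR by auto
  have finR': "finite R'" using finR unfolding R'_def by auto
  obtain \<iota> where \<iota>: "bij_betw \<iota> {..<m-1} R'"
    using ex_bij_betw_nat_finite[of R'] finR cR' unfolding R'_def by (auto simp: atLeast0LessThan)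
  define \<iota>' where "\<iota>' = inv_into {..<m-1} \<iota>"
  have \<iota>'\<iota>: "\<iota>' (\<iota> i) = i" if "i < m - 1" for i
    unfolding \<iota>'_def using \<iota> that by (simp add: bij_betw_def inv_into_f_f)
  have \<iota>R': "\<iota> i \<in> R'" if "i < m - 1" for i using \<iota> that unfolding bij_betw_def by auto
  have \<iota>'R: "\<iota>' v < m - 1" if vR: "v \<in> R'" for v
  proof -
    have "v \<in> \<iota> ` {..<m-1}" using \<iota> vR unfolding bij_betw_def by auto
    then show ?thesis unfolding \<iota>'_def using inv_into_into[of v \<iota> "{..<m-1}"] by auto
  qed
  have sumR': "(\<Sum>v\<in>R'. y (\<iota>' v)) = (\<Sum>i<m-1. y i)" for y :: "nat \<Rightarrow> real"
  proof -
    have "(\<Sum>v\<in>R'. y (\<iota>' v)) = (\<Sum>i<m-1. y (\<iota>' (\<iota> i)))"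
      using sum.reindex_bij_betw[OF \<iota>, of "\<lambda>v. y (\<iota>' v)"] by simp
    also have "\<dots> = (\<Sum>i<m-1. y i)" using \<iota>'\<iota> by (intro sum.cong) auto
    finally show ?thesis .
  qed
  have r0R': "r0 \<notin> R'" "a \<notin> R'" "b \<notin> R'" "c \<notin> R'" using aR b c unfolding R'_def by auto
  have r0ab: "r0 \<noteq> a" "r0 \<noteq> b" "r0 \<noteq> c" using r0 aR b c by auto
  define E where "E = Euclidean_space m"
  define q where "q = (\<lambda>y::nat \<Rightarrow> real. 1 - (\<Sum>i<m-1. y i) - \<bar>y (m-1)\<bar>)"
  define V where "V = {y \<in> topspace E. \<forall>i\<in>insert m {..<m-1}. 0 < (if i = m then q y else y i)}"
  define g where "g = (\<lambda>y::nat \<Rightarrow> real. \<lambda>v. if v = r0 then q y else if v = a then max (y (m-1)) 0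
      else if v = b then max (- y (m-1)) 0 else if v \<in> R' then y (\<iota>' v) else 0)"
  have prE: "continuous_map E euclideanreal (\<lambda>y. y i)" for i
    unfolding E_def using cm_proj_E[where V=UNIV] by simp
  have cq: "continuous_map E euclideanreal q"
    unfolding q_def by (intro continuous_map_diff continuous_map_const[THEN iffD2] continuous_map_sum continuous_map_real_abs prE) auto
  have Vo: "openin E V"
    unfolding V_def by (rule openin_E_pos) (auto intro: cq prE)
  have Rsplit: "R = insert r0 R'" using r0 unfolding R'_def by auto
  have gmem: "g y \<in> topspace (geom_realization D)" if yV: "y \<in> V" for y
  proof -
    have pos1: "0 < y i" if il: "i < m-1" for i
    proof -
      have "i \<noteq> m" "i \<in> insert m {..<m-1}" using il by auto
      then show ?thesis using yV unfolding V_def by force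
    qed
    have pos: "\<forall>i<m-1. 0 < y i" "0 < q y" using pos1 yV unfolding V_def by auto
    have nn: "\<forall>v. 0 \<le> g y v" unfolding g_def using pos \<iota>'R by (auto simp: less_imp_le)
    have sR': "(\<Sum>v\<in>R'. g y v) = (\<Sum>i<m-1. y i)"
    proof -
      have "(\<Sum>v\<in>R'. g y v) = (\<Sum>v\<in>R'. y (\<iota>' v))"
        by (rule sum.cong[OF refl]) (use r0R' r0ab in \<open>auto simp: g_def\<close>)
      then show ?thesis using sumR' by simp
    qed
    show ?thesis
    proof (cases "y (m-1) \<ge> 0")
      case True
      have "{v. g y v \<noteq> 0} \<subseteq> T" unfolding g_def Ta Rsplit using True by auto
      moreover have "sum (g y) T = 1"
      proof -
        have "sum (g y) T = g y r0 + g y a + sum (g y) R'"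
          unfolding Ta Rsplit using r0R' r0ab finR' by simp
        also have "\<dots> = 1" using sR' True unfolding g_def q_def using r0ab by auto
        finally show ?thesis .
      qed
      ultimately show ?thesis using geom_mem[OF sc TD nn] by auto
    next
      case False
      have U1D: "U1 \<in> D" using U1 unfolding facets_def by auto
      have "{v. g y v \<noteq> 0} \<subseteq> U1" unfolding g_def b(1) Rsplit using False by auto
      moreover have "sum (g y) U1 = 1"
      proof -
        have "sum (g y) U1 = g y r0 + g y b + sum (g y) R'"
          unfolding b(1) Rsplit using r0R' r0ab finR' by simp
        also have "\<dots> = 1" using sR' False unfolding g_def q_def using r0ab ba by auto
        finally show ?thesis .
      qed
      ultimately show ?thesis using geom_mem[OF sc U1D nn] by auto
    qed
  qed
  have gc: "continuous_map (subtopology E V) (geom_realization D) g"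
  proof (rule geom_cont_into)
    fix v
    have pr: "continuous_map (subtopology E V) euclideanreal (\<lambda>y. y i)" for i
      unfolding E_def by (rule cm_proj_E)
    have cq': "continuous_map (subtopology E V) euclideanreal q"
      by (rule continuous_map_from_subtopology[OF cq])
    show "continuous_map (subtopology E V) euclideanreal (\<lambda>y. g y v)"
      unfolding g_def by (auto intro!: continuous_map_real_max continuous_map_minus pr cq' continuous_map_const[THEN iffD2])
  next
    fix y assume "y \<in> topspace (subtopology E V)"
    then show "g y \<in> topspace (geom_realization D)" using gmem by (auto simp: topspace_subtopology)
  qed
  have gi: "inj_on g V"
  proof (rule inj_onI)
    fix y z assume y: "y \<in> V" and z: "z \<in> V" and e: "g y = g z"
    show "y = z"
    proof
      fix i
      show "y i = z i"
      proof (cases "i < m - 1")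
        case True
        have "g y (\<iota> i) = y i" "g z (\<iota> i) = z i"
          unfolding g_def using \<iota>R'[OF True] r0R' \<iota>'\<iota>[OF True] by (auto split: if_splits)
        then show ?thesis using e by metis
      next
        case False
        show ?thesis
        proof (cases "i = m - 1")
          case True
          have "y i = g y a - g y b" "z i = g z a - g z b" unfolding g_def True using r0ab ba by auto
          then show ?thesis using e by simp
        next
          case False
          then have "i \<ge> m" using \<open>\<not> i < m - 1\<close> by auto
          then show ?thesis using y z unfolding V_def E_def topspace_Eucl_eq by auto
        qed
      qed
    qed
  qed
  have Vo': "openin (Euclidean_space (d-1)) V" using Vo unfolding E_def m_def .
  have gc': "continuous_map (subtopology (Euclidean_space (d-1)) V) (geom_realization D) g"
    using gc unfolding E_def m_def .
  have O: "openin (geom_realization D) (g ` V)" by (rule iod_X[OF X Vo' gc' gi])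
  define y0 where "y0 = (\<lambda>i. if i < m - 1 then 1 / (2 * real m) else (0::real))"
  have y0V: "y0 \<in> V"
  proof -
    have "(\<Sum>i<m-1. y0 i) = real (m - 1) / (2 * real m)" unfolding y0_def by simp
    also have "\<dots> < 1" using m2 by (simp add: field_simps)
    finally have "0 < q y0" unfolding q_def y0_def by simp
    moreover have "y0 \<in> topspace E" unfolding E_def topspace_Eucl_eq y0_def by auto
    ultimately show ?thesis unfolding V_def y0_def using m2 by auto
  qed
  define f0 where "f0 = g y0"
  have f0c: "f0 c = 0" unfolding f0_def g_def using r0ab ca cb r0R' by auto
  have f0top: "f0 \<in> topspace (geom_realization D)" unfolding f0_def using gmem[OF y0V] .
  have suppf0: "{v. f0 v \<noteq> 0} \<subseteq> U2"
  proof -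
    have "f0 a = 0" "f0 b = 0" unfolding f0_def g_def y0_def using r0ab ba m2 by auto
    moreover have "f0 v = 0" if "v \<notin> T" "v \<noteq> b" for v unfolding f0_def g_def using that Ta Rsplit by auto
    ultimately have "f0 v = 0" if "v \<notin> R" for v using that Ta by (cases "v = a"; cases "v = b") auto
    then show ?thesis unfolding c(1) by blast
  qed
  have U2D: "U2 \<in> D" using U2 unfolding facets_def by auto
  have finU2: "finite U2" using sc U2D unfolding simplicial_complex_def by auto
  have sf0: "sum f0 U2 = 1" by (rule geom_sum[OF f0top suppf0 finU2])
  define s where "s = (\<lambda>t::real. min \<bar>t\<bar> 1)"
  define \<gamma> where "\<gamma> = (\<lambda>t. \<lambda>v. (1 - s t) * f0 v + (if v = c then s t else 0))"
  have \<gamma>c: "continuous_map euclideanreal (geom_realization D) \<gamma>"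
  proof (rule geom_cont_into)
    fix v show "continuous_map euclideanreal euclideanreal (\<lambda>y. \<gamma> y v)"
      unfolding \<gamma>_def s_def by (cases "v = c") (auto intro!: continuous_intros)
  next
    fix t :: real
    have s01: "0 \<le> s t" "s t \<le> 1" unfolding s_def by auto
    have nn: "\<forall>v. 0 \<le> \<gamma> t v" unfolding \<gamma>_def using s01 f0top unfolding geom_top by auto
    have "{v. \<gamma> t v \<noteq> 0} \<subseteq> U2" unfolding \<gamma>_def using suppf0 c(1) by auto
    moreover have "sum (\<gamma> t) U2 = 1"
    proof -
      have "sum (\<gamma> t) U2 = (1 - s t) * sum f0 U2 + (\<Sum>v\<in>U2. if v = c then s t else 0)"
        unfolding \<gamma>_def by (simp add: sum.distrib sum_distrib_left)
      also have "(\<Sum>v\<in>U2. if v = c then s t else 0) = s t" using finU2 c(1) by simp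
      finally show ?thesis using sf0 by simp
    qed
    ultimately show "\<gamma> t \<in> topspace (geom_realization D)" using geom_mem[OF sc U2D nn] by auto
  qed
  have P: "openin euclideanreal {t \<in> topspace euclideanreal. \<gamma> t \<in> g ` V}"
    by (rule openin_continuous_map_preimage[OF \<gamma>c O])
  have "\<gamma> 0 = f0" unfolding \<gamma>_def s_def by auto
  then have "0 \<in> {t \<in> topspace euclideanreal. \<gamma> t \<in> g ` V}" using y0V unfolding f0_def by auto
  from open_pos_point[OF P this] obtain t where t: "t > 0" "\<gamma> t \<in> g ` V" by auto
  then obtain y where "y \<in> V" "\<gamma> t = g y" by auto
  have "g y c = 0" unfolding g_def using r0ab ca cb r0R' by auto
  moreover have "\<gamma> t c = s t" unfolding \<gamma>_def using f0c by simp
  moreover have "s t > 0" unfolding s_def using t(1) by auto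
  ultimately show False using \<open>\<gamma> t = g y\<close> by simp
qed

lemma pm_from_sphere:
  assumes "simplicial_sphere d D" "d \<ge> 3" "T \<in> facets D" "a \<in> T"
  shows "\<exists>!U. U \<in> facets D \<and> U \<noteq> T \<and> T - {a} \<subseteq> U"
proof -
  have sc: "simplicial_complex D" and X: "geom_realization D homeomorphic_space nsphere (d - 1)"
    and fc: "\<And>T. T \<in> facets D \<Longrightarrow> card T = d"
    using assms(1) unfolding simplicial_sphere_def by auto
  obtain U where U: "U \<in> facets D" "U \<noteq> T" "T - {a} \<subseteq> U" using ridge_ge2[OF sc fc assms(2) X assms(3,4)] by blast
  show ?thesis
  proof (rule ex1I[of _ U])
    show "U \<in> facets D \<and> U \<noteq> T \<and> T - {a} \<subseteq> U" using U by auto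
    fix U' assume U': "U' \<in> facets D \<and> U' \<noteq> T \<and> T - {a} \<subseteq> U'"
    show "U' = U"
      using ridge_le2[OF sc fc assms(2) X assms(3,4) U] U' by blast
  qed
qed

theorem lemma4p5:
  fixes d k :: nat and D :: "'a set set" and SS :: "'a set set set"
    and Or :: "'a set \<Rightarrow> 'a set \<Rightarrow> bool"
  assumes "d \<ge> 3"
    and "simplicial_sphere d D"
    and "shellable d D"
    and "2 \<le> k" and "k \<le> d - 1"
    and "star_like d D k SS"
    and "good_orientation d D Or" and "acyclic_orientation Or"
  shows "SS = {sys_of_face d D Or SS \<sigma> | \<sigma>. \<sigma> \<in> D \<and> card \<sigma> = d - k}
    \<and> (\<forall>SS'. star_like d D k SS' \<longrightarrow>
          (SS = SS' \<longleftrightarrow> (\<forall>\<sigma>\<in>D. card \<sigma> = d - k \<longrightarrow>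
              sys_of_face d D Or SS \<sigma> = sys_of_face d D Or SS' \<sigma>)))"
proof -
  have sc: "simplicial_complex D" and fc: "\<And>T. T \<in> facets D \<Longrightarrow> card T = d"
    using assms(2) unfolding simplicial_sphere_def by auto
  interpret pm d D
  proof
    show "simplicial_complex D" using sc .
    show "\<And>T. T \<in> facets D \<Longrightarrow> card T = d" using fc .
    show "3 \<le> d" using assms(1) .
    show "\<And>T a. T \<in> facets D \<Longrightarrow> a \<in> T \<Longrightarrow> \<exists>!U. U \<in> facets D \<and> U \<noteq> T \<and> T - {a} \<subseteq> U"
      using pm_from_sphere[OF assms(2,1)] by blast
  qed
  have "k \<le> d" using assms(5) by auto
  then show ?thesis using main[OF assms(6,7,8)] by blast
qed

end
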